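(* Let $E$ be any graph, $K$ a field, and let $(H,S)$ and $(G,T)$ be admissible pairs of $E$ with $(H,S)\leq (G,T)$. Let $v\in B_G$. Then $v^G\in I(H,S)$ (in $L_K(E)$) if and only if $v\in S$ and $v$ emits no edges whose range lies in $G\setminus H$.
   Context: $E$ is a directed graph of arbitrary cardinality with source and range maps $\mathbf{s},\mathbf{r}$; a vertex is an infinite emitter if it emits infinitely many edges. $L_K(E)$ denotes the Leavitt path algebra of $E$ over $K$ (generated by vertices, edges and ghost edges $e^*$ subject to the usual relations (V), (E1), (E2), (CK1), (CK2)). A set $H\subseteq E^0$ is hereditary if every vertex reachable by a path from a vertex of $H$ lies in $H$, and saturated if every vertex $v$ that emits finitely many but at least one edge and has $\mathbf{r}(\mathbf{s}^{-1}(v))\subseteq H$ lies in $H$. For hereditary saturated $H$, the breaking vertices of $H$ form the set $B_H=\{v\in E^0\setminus H: v \text{ is an infinite emitter and } 0<|\mathbf{s}^{-1}(v)\cap\mathbf{r}^{-1}(E^0\setminus H)|<\infty\}$, and for $v\in B_H$ one puts $v^H=v-\sum ee^*$, the sum over $e\in \mathbf{s}^{-1}(v)\cap\mathbf{r}^{-1}(E^0\setminus H)$. An admissible pair is a pair $(H,S)$ with $H$ hereditary and saturated and $S\subseteq B_H$; $I(H,S)$ is the ideal of $L_K(E)$ generated by $H\cup\{v^H: v\in S\}$. Admissible pairs are ordered by $(H,S)\leq (G,T)$ iff $H\subseteq G$ and $S\subseteq G\cup T$. *)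

theory Defs
  imports "HOL-Algebra.QuotRing"
begin

text \<open>A directed graph E is given by arbitrary types of vertices 'v and edges 'e
  together with source and range maps s r :: 'e => 'v (E^0 = UNIV, E^1 = UNIV).\<close>

definition edge_rel :: "('e \<Rightarrow> 'v) \<Rightarrow> ('e \<Rightarrow> 'v) \<Rightarrow> ('v \<times> 'v) set" where
  "edge_rel s r = {(s e, r e) | e. True}"

definition infinite_emitter :: "('e \<Rightarrow> 'v) \<Rightarrow> 'v \<Rightarrow> bool" where
  "infinite_emitter s v \<longleftrightarrow> infinite (s -` {v})"

definition regular_vertex :: "('e \<Rightarrow> 'v) \<Rightarrow> 'v \<Rightarrow> bool" where
  "regular_vertex s v \<longleftrightarrow> finite (s -` {v}) \<and> s -` {v} \<noteq> {}"

definition hereditary :: "('e \<Rightarrow> 'v) \<Rightarrow> ('e \<Rightarrow> 'v) \<Rightarrow> 'v set \<Rightarrow> bool" where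
  "hereditary s r H \<longleftrightarrow> (\<forall>u\<in>H. \<forall>w. (u, w) \<in> (edge_rel s r)\<^sup>* \<longrightarrow> w \<in> H)"

definition saturated :: "('e \<Rightarrow> 'v) \<Rightarrow> ('e \<Rightarrow> 'v) \<Rightarrow> 'v set \<Rightarrow> bool" where
  "saturated s r H \<longleftrightarrow> (\<forall>v. regular_vertex s v \<and> r ` (s -` {v}) \<subseteq> H \<longrightarrow> v \<in> H)"

definition breaking_vertices :: "('e \<Rightarrow> 'v) \<Rightarrow> ('e \<Rightarrow> 'v) \<Rightarrow> 'v set \<Rightarrow> 'v set" where
  "breaking_vertices s r H = {v. v \<notin> H \<and> infinite_emitter s v \<and>
       finite (s -` {v} \<inter> r -` (- H)) \<and> 0 < card (s -` {v} \<inter> r -` (- H))}"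

definition admissible :: "('e \<Rightarrow> 'v) \<Rightarrow> ('e \<Rightarrow> 'v) \<Rightarrow> 'v set \<Rightarrow> 'v set \<Rightarrow> bool" where
  "admissible s r H S \<longleftrightarrow> hereditary s r H \<and> saturated s r H \<and> S \<subseteq> breaking_vertices s r H"

definition adm_le :: "'v set \<times> 'v set \<Rightarrow> 'v set \<times> 'v set \<Rightarrow> bool" where
  "adm_le HS GT \<longleftrightarrow> fst HS \<subseteq> fst GT \<and> snd HS \<subseteq> fst GT \<union> snd GT"

datatype ('v, 'e) gen = Vx 'v | Ed 'e | Gh 'e

text \<open>Elements: finitely supported K-valued functions on words in the generators.\<close>
type_synonym ('v, 'e, 'k) fa = "('v, 'e) gen list \<Rightarrow> 'k"

definition fa_add :: "('v,'e,'k::field) fa \<Rightarrow> ('v,'e,'k) fa \<Rightarrow> ('v,'e,'k) fa" where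
  "fa_add f g = (\<lambda>w. f w + g w)"

definition fa_diff :: "('v,'e,'k::field) fa \<Rightarrow> ('v,'e,'k) fa \<Rightarrow> ('v,'e,'k) fa" where
  "fa_diff f g = (\<lambda>w. f w - g w)"

definition fa_mult :: "('v,'e,'k::field) fa \<Rightarrow> ('v,'e,'k) fa \<Rightarrow> ('v,'e,'k) fa" where
  "fa_mult f g = (\<lambda>w. \<Sum>i\<le>length w. f (take i w) * g (drop i w))"

definition fa_zero :: "('v,'e,'k::field) fa" where
  "fa_zero = (\<lambda>w. 0)"

definition fa_one :: "('v,'e,'k::field) fa" where
  "fa_one = (\<lambda>w. if w = [] then 1 else 0)"

definition fa_sum :: "('a \<Rightarrow> ('v,'e,'k::field) fa) \<Rightarrow> 'a set \<Rightarrow> ('v,'e,'k) fa" where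
  "fa_sum f A = (\<lambda>w. \<Sum>a\<in>A. f a w)"

definition gen_el :: "('v,'e) gen \<Rightarrow> ('v,'e,'k::field) fa" where
  "gen_el x = (\<lambda>w. if w = [x] then 1 else 0)"

definition fa_ring :: "('v,'e,'k::field) fa ring" where
  "fa_ring = \<lparr>carrier = {f. finite {w. f w \<noteq> 0}}, mult = fa_mult, one = fa_one,
              zero = fa_zero, add = fa_add\<rparr>"

definition lpa_rels :: "('e \<Rightarrow> 'v) \<Rightarrow> ('e \<Rightarrow> 'v) \<Rightarrow> ('v,'e,'k::field) fa set" where
  "lpa_rels s r =
     {fa_diff (fa_mult (gen_el (Vx v)) (gen_el (Vx w))) (if v = w then gen_el (Vx v) else fa_zero) | v w. True}
   \<union> {fa_diff (fa_mult (gen_el (Vx (s e))) (gen_el (Ed e))) (gen_el (Ed e)) | e. True}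
   \<union> {fa_diff (fa_mult (gen_el (Ed e)) (gen_el (Vx (r e)))) (gen_el (Ed e)) | e. True}
   \<union> {fa_diff (fa_mult (gen_el (Vx (r e))) (gen_el (Gh e))) (gen_el (Gh e)) | e. True}
   \<union> {fa_diff (fa_mult (gen_el (Gh e)) (gen_el (Vx (s e)))) (gen_el (Gh e)) | e. True}
   \<union> {fa_diff (fa_mult (gen_el (Gh e)) (gen_el (Ed f))) (if e = f then gen_el (Vx (r e)) else fa_zero) | e f. True}
   \<union> {fa_diff (gen_el (Vx v)) (fa_sum (\<lambda>e. fa_mult (gen_el (Ed e)) (gen_el (Gh e))) (s -` {v})) | v. regular_vertex s v}"

text \<open>The (unitization of the) Leavitt path algebra: free unital algebra modulo the
  ideal generated by the relations (V),(E1),(E2),(CK1),(CK2).  L_K(E) is the ideal of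
  this ring spanned by the classes of nonempty words; ideals of L_K(E) generated by
  subsets of L_K(E) coincide with ideals of this ring generated by the same subsets.\<close>

definition lpa_rel_ideal :: "('e \<Rightarrow> 'v) \<Rightarrow> ('e \<Rightarrow> 'v) \<Rightarrow> ('v,'e,'k::field) fa set" where
  "lpa_rel_ideal s r = genideal fa_ring (lpa_rels s r)"

definition LPA :: "('e \<Rightarrow> 'v) \<Rightarrow> ('e \<Rightarrow> 'v) \<Rightarrow> ('v,'e,'k::field) fa set ring" where
  "LPA s r = fa_ring Quot lpa_rel_ideal s r"

definition lpa_cls :: "('e \<Rightarrow> 'v) \<Rightarrow> ('e \<Rightarrow> 'v) \<Rightarrow> ('v,'e,'k::field) fa \<Rightarrow> ('v,'e,'k) fa set" where
  "lpa_cls s r x = a_r_coset fa_ring (lpa_rel_ideal s r) x"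

definition vH :: "('e \<Rightarrow> 'v) \<Rightarrow> ('e \<Rightarrow> 'v) \<Rightarrow> 'v set \<Rightarrow> 'v \<Rightarrow> ('v,'e,'k::field) fa" where
  "vH s r H v = fa_diff (gen_el (Vx v))
      (fa_sum (\<lambda>e. fa_mult (gen_el (Ed e)) (gen_el (Gh e))) (s -` {v} \<inter> r -` (- H)))"

definition I_HS :: "('e \<Rightarrow> 'v) \<Rightarrow> ('e \<Rightarrow> 'v) \<Rightarrow> 'v set \<Rightarrow> 'v set \<Rightarrow> ('v,'e,'k::field) fa set set" where
  "I_HS s r H S = genideal (LPA s r)
      ((\<lambda>u. lpa_cls s r (gen_el (Vx u))) ` H \<union> (\<lambda>u. lpa_cls s r (vH s r H u)) ` S)"

end

theory Submission
  imports Defs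
begin
definition fsupp :: "('v,'e,'k::field) fa \<Rightarrow> ('v,'e) gen list set" where
  "fsupp f = {w. f w \<noteq> 0}"

lemma mult_expand:
  assumes "finite A" "finite B" "fsupp f \<subseteq> A" "fsupp g \<subseteq> B"
  shows "fa_mult f g w = (\<Sum>u\<in>A. \<Sum>v\<in>B. if u @ v = w then f u * g v else 0)"
proof -
  let ?S = "(\<lambda>i. (take i w, drop i w)) ` {..length w}"
  have Seq: "?S = {p. fst p @ snd p = w}"
  proof (rule subset_antisym)
    show "?S \<subseteq> {p. fst p @ snd p = w}" by auto
    show "{p. fst p @ snd p = w} \<subseteq> ?S"
    proof
    fix p assume "p \<in> {p. fst p @ snd p = w}"
    then show "p \<in> ?S"
      by (cases p) (auto intro!: image_eqI[of _ _ "length (fst p)"])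
  qed
  qed
  have inj: "inj_on (\<lambda>i. (take i w, drop i w)) {..length w}"
    by (auto simp: inj_on_def) (metis length_take min.absorb2)
  have "(\<Sum>u\<in>A. \<Sum>v\<in>B. if u @ v = w then f u * g v else 0)
      = (\<Sum>p\<in>A\<times>B. if fst p @ snd p = w then f (fst p) * g (snd p) else 0)"
    by (simp add: sum.cartesian_product case_prod_beta)
  also have "\<dots> = (\<Sum>p\<in>{p\<in>A\<times>B. fst p @ snd p = w}. f (fst p) * g (snd p))"
    using assms by (simp add: sum.inter_filter)
  also have "\<dots> = (\<Sum>p\<in>?S. f (fst p) * g (snd p))"
  proof (rule sum.mono_neutral_cong_left)
    show "finite ?S" by simp
    show "{p\<in>A\<times>B. fst p @ snd p = w} \<subseteq> ?S" using Seq by auto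
    show "\<forall>i\<in>?S - {p\<in>A\<times>B. fst p @ snd p = w}. f (fst i) * g (snd i) = 0"
      using assms(3,4) Seq by (auto simp: fsupp_def)
  qed simp
  also have "\<dots> = (\<Sum>i\<le>length w. f (take i w) * g (drop i w))"
    by (subst sum.reindex[OF inj]) simp
  finally show ?thesis by (simp add: fa_mult_def)
qed

lemma mult_supp:
  assumes "finite (fsupp f)" "finite (fsupp g)"
  shows "fsupp (fa_mult f g) \<subseteq> (\<lambda>(u,v). u @ v) ` (fsupp f \<times> fsupp g)"
proof
  fix w assume "w \<in> fsupp (fa_mult f g)"
  then have "(\<Sum>u\<in>fsupp f. \<Sum>v\<in>fsupp g. if u @ v = w then f u * g v else 0) \<noteq> 0"
    using mult_expand[OF assms order_refl order_refl] by (simp add: fsupp_def)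
  then obtain u v where "u \<in> fsupp f" "v \<in> fsupp g" "u @ v = w"
    by (smt (verit) sum.neutral)
  then show "w \<in> (\<lambda>(u,v). u @ v) ` (fsupp f \<times> fsupp g)" by force
qed

lemma mult_finite:
  assumes "finite (fsupp f)" "finite (fsupp g)"
  shows "finite (fsupp (fa_mult f g))"
  using mult_supp[OF assms] assms by (meson finite_SigmaI finite_imageI finite_subset)

lemma mult_lin:
  assumes "finite A" "finite B" "finite W" "fsupp f \<subseteq> A" "fsupp g \<subseteq> B"
    and "\<And>u v. u \<in> A \<Longrightarrow> v \<in> B \<Longrightarrow> u @ v \<in> W"
  shows "(\<Sum>w\<in>W. fa_mult f g w * \<Phi> w) = (\<Sum>u\<in>A. \<Sum>v\<in>B. f u * g v * \<Phi> (u @ v))"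
proof -
  have "(\<Sum>w\<in>W. fa_mult f g w * \<Phi> w)
     = (\<Sum>w\<in>W. \<Sum>u\<in>A. \<Sum>v\<in>B. if u @ v = w then f u * g v * \<Phi> w else 0)"
    unfolding mult_expand[OF assms(1,2,4,5)] sum_distrib_right by (intro sum.cong refl) simp
  also have "\<dots> = (\<Sum>u\<in>A. \<Sum>v\<in>B. \<Sum>w\<in>W. if u @ v = w then f u * g v * \<Phi> w else 0)"
    apply (rule trans[OF sum.swap[where A=W and B=A]]) apply (rule sum.cong[OF refl]) apply (rule sum.swap) done
  also have "\<dots> = (\<Sum>u\<in>A. \<Sum>v\<in>B. f u * g v * \<Phi> (u @ v))"
  proof (intro sum.cong refl)
    fix u v assume "u \<in> A" "v \<in> B"
    then have "u @ v \<in> W" by (rule assms(6))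
    then show "(\<Sum>w\<in>W. if u @ v = w then f u * g v * \<Phi> w else 0) = f u * g v * \<Phi> (u @ v)"
      using assms(3) by (simp add: sum.delta')
  qed
  finally show ?thesis .
qed

lemma mult_assoc:
  assumes f: "finite (fsupp f)" and g: "finite (fsupp g)" and h: "finite (fsupp h)"
  shows "fa_mult (fa_mult f g) h = fa_mult f (fa_mult g h)"
proof
  fix w
  define A where "A = fsupp f"
  define B where "B = fsupp g"
  define C where "C = fsupp h"
  define AB where "AB = (\<lambda>(u,v). u @ v) ` (A \<times> B)"
  define BC where "BC = (\<lambda>(u,v). u @ v) ` (B \<times> C)"
  have fin: "finite A" "finite B" "finite C" "finite AB" "finite BC"
    using f g h by (auto simp: A_def B_def C_def AB_def BC_def)
  have sAB: "fsupp (fa_mult f g) \<subseteq> AB" using mult_supp[OF f g] by (simp add: AB_def A_def B_def)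
  have sBC: "fsupp (fa_mult g h) \<subseteq> BC" using mult_supp[OF g h] by (simp add: BC_def C_def B_def)
  let ?T = "\<Sum>u\<in>A. \<Sum>v\<in>B. \<Sum>t\<in>C. if u @ v @ t = w then f u * g v * h t else 0"
  have "fa_mult (fa_mult f g) h w = (\<Sum>p\<in>AB. \<Sum>t\<in>C. if p @ t = w then fa_mult f g p * h t else 0)"
    by (rule mult_expand[OF fin(4,3) sAB]) (simp add: C_def)
  also have "\<dots> = (\<Sum>t\<in>C. \<Sum>p\<in>AB. fa_mult f g p * (h t * (if p @ t = w then 1 else 0)))"
    by (subst sum.swap) (intro sum.cong refl, simp)
  also have "\<dots> = (\<Sum>t\<in>C. \<Sum>u\<in>A. \<Sum>v\<in>B. f u * g v * (h t * (if (u @ v) @ t = w then 1 else 0)))"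
    by (intro sum.cong refl mult_lin[OF fin(1,2,4)]) (auto simp: A_def B_def AB_def)
  also have "\<dots> = ?T"
    by (subst sum.swap, subst (2) sum.swap) (intro sum.cong refl, simp)
  finally have L: "fa_mult (fa_mult f g) h w = ?T" .
  have "fa_mult f (fa_mult g h) w = (\<Sum>u\<in>A. \<Sum>q\<in>BC. if u @ q = w then f u * fa_mult g h q else 0)"
    by (rule mult_expand[OF fin(1,5) _ sBC]) (simp add: A_def)
  also have "\<dots> = (\<Sum>u\<in>A. f u * (\<Sum>q\<in>BC. fa_mult g h q * (if u @ q = w then 1 else 0)))"
    by (simp add: sum_distrib_left) (intro sum.cong refl, simp)
  also have "\<dots> = (\<Sum>u\<in>A. f u * (\<Sum>v\<in>B. \<Sum>t\<in>C. g v * h t * (if u @ (v @ t) = w then 1 else 0)))"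
    by (intro sum.cong refl arg_cong2[where f="(*)"] mult_lin[OF fin(2,3,5)]) (auto simp: B_def C_def BC_def)
  also have "\<dots> = ?T"
    by (simp add: sum_distrib_left) (intro sum.cong refl, simp)
  finally show "fa_mult (fa_mult f g) h w = fa_mult f (fa_mult g h) w" using L by simp
qed

lemma carrier_fa: "carrier fa_ring = {f. finite (fsupp f)}"
  by (simp add: fa_ring_def fsupp_def)

lemma fa_ring_simps: "mult fa_ring = fa_mult" "add fa_ring = fa_add" "one fa_ring = fa_one"
  "zero fa_ring = fa_zero"
  by (simp_all add: fa_ring_def)

lemma fsupp_one: "fsupp fa_one \<subseteq> {[]}" by (auto simp: fsupp_def fa_one_def)

lemma one_mult: "finite (fsupp f) \<Longrightarrow> fa_mult fa_one f = f"
proof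
  fix w assume "finite (fsupp f)"
  then have "fa_mult fa_one f w = (\<Sum>u\<in>{[]}. \<Sum>v\<in>fsupp f. if u @ v = w then fa_one u * f v else 0)"
    by (intro mult_expand fsupp_one) auto
  also have "\<dots> = f w" using \<open>finite (fsupp f)\<close>
    by (simp add: sum.delta fa_one_def fsupp_def)
  finally show "fa_mult fa_one f w = f w" .
qed

lemma mult_one: "finite (fsupp f) \<Longrightarrow> fa_mult f fa_one = f"
proof
  fix w assume "finite (fsupp f)"
  then have "fa_mult f fa_one w = (\<Sum>u\<in>fsupp f. \<Sum>v\<in>{[]}. if u @ v = w then f u * fa_one v else 0)"
    by (intro mult_expand fsupp_one) auto
  also have "\<dots> = f w" using \<open>finite (fsupp f)\<close>
    by (simp add: sum.delta fa_one_def fsupp_def)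
  finally show "fa_mult f fa_one w = f w" .
qed

lemma add_finite: "finite (fsupp f) \<Longrightarrow> finite (fsupp g) \<Longrightarrow> finite (fsupp (fa_add f g))"
  by (rule finite_subset[of _ "fsupp f \<union> fsupp g"]) (auto simp: fsupp_def fa_add_def)

lemma abelian_fa: "abelian_group (fa_ring :: ('v,'e,'k::field) fa ring)"
  apply (rule abelian_groupI, simp_all add: carrier_fa fa_ring_simps)
  subgoal by (rule add_finite)
  subgoal by (simp add: fsupp_def fa_zero_def)
  subgoal by (simp add: fa_add_def add.assoc)
  subgoal by (simp add: fa_add_def add.commute)
  subgoal by (simp add: fa_add_def fa_zero_def)
  subgoal for x by (intro exI[of _ "\<lambda>w. - x w"]) (simp add: fsupp_def fa_add_def fa_zero_def)
  done

lemma ring_fa: "ring (fa_ring :: ('v,'e,'k::field) fa ring)"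
  apply (rule ringI[OF abelian_fa])
    apply (rule monoidI, simp_all add: carrier_fa fa_ring_simps)
  subgoal by (rule mult_finite)
  subgoal using fsupp_one finite_subset by blast
  subgoal by (simp add: mult_assoc)
  subgoal by (simp add: one_mult)
  subgoal by (simp add: mult_one)
  subgoal by (simp add: fun_eq_iff fa_mult_def fa_add_def sum.distrib algebra_simps)
  subgoal by (simp add: fun_eq_iff fa_mult_def fa_add_def sum.distrib algebra_simps)
  done

lemma a_inv_fa:
  assumes "finite (fsupp f)"
  shows "a_inv (fa_ring :: ('v,'e,'k::field) fa ring) f = (\<lambda>w. - f w)"
proof -
  interpret ring "fa_ring :: ('v,'e,'k::field) fa ring" by (rule ring_fa)
  show ?thesis
    by (rule minus_equality) (use assms in \<open>auto simp: carrier_fa fa_ring_simps fsupp_def fa_add_def fa_zero_def\<close>)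
qed

locale grep =
  fixes s r :: "'e \<Rightarrow> 'v" and H S :: "'v set"
    and valid :: "'x \<Rightarrow> bool" and loc :: "'x \<Rightarrow> 'v"
    and dec :: "'x \<Rightarrow> ('e \<times> 'x) option" and cns :: "'e \<Rightarrow> 'x \<Rightarrow> 'x"
  assumes cons_ok: "valid x \<Longrightarrow> loc x = r e \<Longrightarrow> valid (cns e x) \<and> dec (cns e x) = Some (e, x) \<and> loc (cns e x) = s e"
  and dec_ok: "valid y \<Longrightarrow> dec y = Some (e, x) \<Longrightarrow> y = cns e x \<and> valid x \<and> loc x = r e"
  and reg_ok: "valid x \<Longrightarrow> regular_vertex s (loc x) \<Longrightarrow> dec x \<noteq> None"
  and H_ok: "valid x \<Longrightarrow> loc x \<notin> H"
  and S_ok: "valid x \<Longrightarrow> loc x \<in> S \<Longrightarrow> \<exists>e x'. dec x = Some (e, x') \<and> r e \<notin> H"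
begin

lemma dec_loc: "valid y \<Longrightarrow> dec y = Some (e, x) \<Longrightarrow> loc y = s e"
  using dec_ok cons_ok by metis

fun actg :: "('v,'e) gen \<Rightarrow> 'x \<Rightarrow> 'x option" where
  "actg (Vx u) x = (if loc x = u then Some x else None)"
| "actg (Ed e) x = (if loc x = r e then Some (cns e x) else None)"
| "actg (Gh e) x = (case dec x of None \<Rightarrow> None | Some (f, x') \<Rightarrow> if f = e then Some x' else None)"

primrec act :: "('v,'e) gen list \<Rightarrow> 'x \<Rightarrow> 'x option" where
  "act [] x = Some x"
| "act (g # w) x = (case act w x of None \<Rightarrow> None | Some z \<Rightarrow> actg g z)"

lemma act_append: "act (u @ v) x = (case act v x of None \<Rightarrow> None | Some z \<Rightarrow> act u z)"
  by (induction u) (auto split: option.splits)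

lemma actg_valid: "valid x \<Longrightarrow> actg g x = Some z \<Longrightarrow> valid z"
  by (cases g) (auto simp: cons_ok dec_ok split: if_splits option.splits)

lemma act_valid: "valid x \<Longrightarrow> act w x = Some z \<Longrightarrow> valid z"
  by (induction w arbitrary: z) (auto simp: actg_valid split: option.splits)

lemma actg_inj: "valid x1 \<Longrightarrow> valid x2 \<Longrightarrow> actg g x1 = Some y \<Longrightarrow> actg g x2 = Some y \<Longrightarrow> x1 = x2"
  apply (cases g)
    apply (auto split: if_splits option.splits)
   apply (metis cons_ok option.inject prod.inject)
  apply (metis dec_ok)
  done

lemma act_inj: "valid x1 \<Longrightarrow> valid x2 \<Longrightarrow> act w x1 = Some y \<Longrightarrow> act w x2 = Some y \<Longrightarrow> x1 = x2"
proof (induction w arbitrary: y)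
  case Nil then show ?case by simp
next
  case (Cons g w)
  then obtain z1 z2 where "act w x1 = Some z1" "act w x2 = Some z2" "actg g z1 = Some y" "actg g z2 = Some y"
    by (auto split: option.splits)
  moreover have "valid z1" "valid z2" using act_valid Cons.prems calculation by blast+
  ultimately show ?case using actg_inj Cons by metis
qed

definition ind :: "bool \<Rightarrow> 'k::field" where "ind b = (if b then 1 else 0)"

definition Mx :: "('v,'e,'k::field) fa \<Rightarrow> 'x \<Rightarrow> 'x \<Rightarrow> 'k" where
  "Mx f y x = (\<Sum>w\<in>fsupp f. f w * ind (act w x = Some y))"

lemma Mx_eq: "finite W \<Longrightarrow> fsupp f \<subseteq> W \<Longrightarrow> Mx f y x = (\<Sum>w\<in>W. f w * ind (act w x = Some y))"
  unfolding Mx_def by (rule sum.mono_neutral_left) (auto simp: fsupp_def)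


lemma Mx_mult:
  assumes "finite (fsupp a)" "finite (fsupp f)"
  shows "Mx (fa_mult a f) y x = (\<Sum>u\<in>fsupp a. \<Sum>v\<in>fsupp f. a u * f v * ind (act (u @ v) x = Some y))"
proof -
  let ?W = "(\<lambda>(u,v). u @ v) ` (fsupp a \<times> fsupp f)"
  have "Mx (fa_mult a f) y x = (\<Sum>w\<in>?W. fa_mult a f w * ind (act w x = Some y))"
    by (rule Mx_eq) (use assms mult_supp in auto)
  also have "\<dots> = (\<Sum>u\<in>fsupp a. \<Sum>v\<in>fsupp f. a u * f v * ind (act (u @ v) x = Some y))"
    by (rule mult_lin) (use assms in auto)
  finally show ?thesis .
qed

lemma Mx_left_zero:
  fixes a f :: "('v,'e,'k::field) fa"
  assumes "finite (fsupp a)" "finite (fsupp f)" "valid x" "\<And>z. Mx f z x = 0"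
  shows "Mx (fa_mult a f) y x = 0"
proof -
  have inner: "(\<Sum>v\<in>fsupp f. f v * ind (act (u @ v) x = Some y)) = 0" for u
  proof (cases "\<exists>z0. valid z0 \<and> act u z0 = Some y")
    case True
    then obtain z0 where z0: "valid z0" "act u z0 = Some y" by blast
    have "ind (act (u @ v) x = Some y) = (ind (act v x = Some z0) :: 'k)" for v
    proof -
      have "act (u @ v) x = Some y \<longleftrightarrow> act v x = Some z0"
      proof
        assume h: "act (u @ v) x = Some y"
        then obtain z where z: "act v x = Some z" "act u z = Some y"
          by (auto simp: act_append split: option.splits)
        then have "z = z0" using act_inj[OF act_valid[OF assms(3) z(1)] z0(1)] z0(2) by blast
        then show "act v x = Some z0" using z by simp
      qed (simp add: act_append z0)
      then show ?thesis by simp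
    qed
    then have "(\<Sum>v\<in>fsupp f. f v * ind (act (u @ v) x = Some y)) = Mx f z0 x"
      by (simp add: Mx_def)
    then show ?thesis using assms(4) by simp
  next
    case False
    have "ind (act (u @ v) x = Some y) = (0::'k)" for v
      using False act_valid[OF assms(3)] by (auto simp: ind_def act_append split: option.splits)
    then show ?thesis by simp
  qed
  have "Mx (fa_mult a f) y x = (\<Sum>u\<in>fsupp a. a u * (\<Sum>v\<in>fsupp f. f v * ind (act (u @ v) x = Some y)))"
    by (simp add: Mx_mult[OF assms(1,2)] sum_distrib_left mult.assoc)
  also have "\<dots> = 0" by (simp add: inner)
  finally show ?thesis .
qed

lemma Mx_right_zero:
  fixes a f :: "('v,'e,'k::field) fa"
  assumes "finite (fsupp a)" "finite (fsupp f)" "valid x" "\<And>z y. valid z \<Longrightarrow> Mx f y z = 0"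
  shows "Mx (fa_mult f a) y x = 0"
proof -
  have inner: "(\<Sum>u\<in>fsupp f. f u * ind (act (u @ v) x = Some y)) = 0" for v
  proof (cases "act v x")
    case None
    then show ?thesis by (simp add: act_append ind_def)
  next
    case (Some z)
    then have "(\<Sum>u\<in>fsupp f. f u * ind (act (u @ v) x = Some y)) = Mx f y z"
      by (simp add: Mx_def act_append)
    then show ?thesis using assms(4) act_valid[OF assms(3) Some] by simp
  qed
  have "Mx (fa_mult f a) y x = (\<Sum>v\<in>fsupp a. a v * (\<Sum>u\<in>fsupp f. f u * ind (act (u @ v) x = Some y)))"
    by (simp add: Mx_mult[OF assms(2,1)] sum_distrib_left mult_ac) (rule sum.swap)
  also have "\<dots> = 0" by (simp add: inner)
  finally show ?thesis .
qed


lemma Mx_add: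
  fixes f g :: "('v,'e,'k::field) fa"
  assumes "finite (fsupp f)" "finite (fsupp g)"
  shows "Mx (fa_add f g) y x = Mx f y x + Mx g y x"
proof -
  have W: "finite (fsupp f \<union> fsupp g)" using assms by simp
  have "fsupp (fa_add f g) \<subseteq> fsupp f \<union> fsupp g" by (auto simp: fsupp_def fa_add_def)
  then show ?thesis
    by (simp add: Mx_eq[OF W] sum.distrib fa_add_def algebra_simps)
qed

lemma Mx_diff:
  fixes f g :: "('v,'e,'k::field) fa"
  assumes "finite (fsupp f)" "finite (fsupp g)"
  shows "Mx (fa_diff f g) y x = Mx f y x - Mx g y x"
proof -
  have W: "finite (fsupp f \<union> fsupp g)" using assms by simp
  have "fsupp (fa_diff f g) \<subseteq> fsupp f \<union> fsupp g" by (auto simp: fsupp_def fa_diff_def)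
  then show ?thesis
    by (simp add: Mx_eq[OF W] sum_subtractf fa_diff_def algebra_simps)
qed

lemma Mx_neg:
  fixes f :: "('v,'e,'k::field) fa"
  shows "Mx (\<lambda>w. - f w) y x = - Mx f y x"
  by (simp add: Mx_def fsupp_def sum_negf)

lemma Mx_zero: "Mx fa_zero y x = 0"
  by (simp add: Mx_def fsupp_def fa_zero_def)

lemma fsupp_gen: "fsupp (gen_el g) = {[g]}"
  by (auto simp: fsupp_def gen_el_def)

lemma fin_gen: "finite (fsupp (gen_el g))" by (simp add: fsupp_gen)

lemma Mx_gen: "Mx (gen_el g :: ('v,'e,'k::field) fa) y x = ind (actg g x = Some y)"
  unfolding Mx_def fsupp_gen by (simp add: gen_el_def)

lemma Mx_gen2: "Mx (fa_mult (gen_el g) (gen_el h) :: ('v,'e,'k::field) fa) y x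
    = ind ((case actg h x of None \<Rightarrow> None | Some z \<Rightarrow> actg g z) = Some y)"
  unfolding Mx_mult[OF fin_gen fin_gen] fsupp_gen by (simp add: gen_el_def)

lemma Mx_sum:
  fixes F :: "'a \<Rightarrow> ('v,'e,'k::field) fa"
  assumes "finite E" "\<And>e. e \<in> E \<Longrightarrow> finite (fsupp (F e))"
  shows "Mx (fa_sum F E) y x = (\<Sum>e\<in>E. Mx (F e) y x)"
proof -
  let ?W = "\<Union>e\<in>E. fsupp (F e)"
  have W: "finite ?W" using assms by simp
  have "fsupp (fa_sum F E) \<subseteq> ?W"
    by (auto simp: fsupp_def fa_sum_def intro: ccontr)
  then have "Mx (fa_sum F E) y x = (\<Sum>w\<in>?W. \<Sum>e\<in>E. F e w * ind (act w x = Some y))"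
    by (simp add: Mx_eq[OF W] fa_sum_def sum_distrib_right)
  also have "\<dots> = (\<Sum>e\<in>E. \<Sum>w\<in>?W. F e w * ind (act w x = Some y))"
    by (rule sum.swap)
  also have "\<dots> = (\<Sum>e\<in>E. Mx (F e) y x)"
    by (intro sum.cong refl, subst Mx_eq[OF W]) auto
  finally show ?thesis .
qed

definition Jset :: "('v,'e,'k::field) fa set" where
  "Jset = {f. finite (fsupp f) \<and> (\<forall>x y. valid x \<longrightarrow> Mx f y x = 0)}"

lemma Jset_ideal: "ideal (Jset :: ('v,'e,'k::field) fa set) fa_ring"
proof (rule idealI[OF ring_fa])
  show "subgroup (Jset :: ('v,'e,'k::field) fa set) (add_monoid fa_ring)"
  proof (rule subgroup.intro)
    show "Jset \<subseteq> carrier (add_monoid (fa_ring :: ('v,'e,'k::field) fa ring))"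
      by (auto simp: Jset_def carrier_fa)
    show "\<And>x y. x \<in> Jset \<Longrightarrow> y \<in> Jset \<Longrightarrow> x \<otimes>\<^bsub>add_monoid (fa_ring :: ('v,'e,'k::field) fa ring)\<^esub> y \<in> Jset"
      by (auto simp: Jset_def fa_ring_simps add_finite Mx_add)
    show "\<one>\<^bsub>add_monoid (fa_ring :: ('v,'e,'k::field) fa ring)\<^esub> \<in> Jset"
      by (auto simp: Jset_def fa_ring_simps Mx_zero) (simp add: fsupp_def fa_zero_def)
    show "\<And>x. x \<in> Jset \<Longrightarrow> inv\<^bsub>add_monoid (fa_ring :: ('v,'e,'k::field) fa ring)\<^esub> x \<in> Jset"
    proof -
      fix x :: "('v,'e,'k) fa" assume "x \<in> Jset"
      then have "inv\<^bsub>add_monoid (fa_ring :: ('v,'e,'k::field) fa ring)\<^esub> x = (\<lambda>w. - x w)"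
        using a_inv_fa[of x] by (simp add: a_inv_def Jset_def)
      with \<open>x \<in> Jset\<close> show "inv\<^bsub>add_monoid (fa_ring :: ('v,'e,'k::field) fa ring)\<^esub> x \<in> Jset"
        by (auto simp: Jset_def Mx_neg) (simp add: fsupp_def)
    qed
  qed
  show "\<And>a x. a \<in> Jset \<Longrightarrow> x \<in> carrier (fa_ring :: ('v,'e,'k::field) fa ring) \<Longrightarrow> x \<otimes>\<^bsub>fa_ring\<^esub> a \<in> Jset"
    by (auto simp: Jset_def carrier_fa fa_ring_simps mult_finite intro: Mx_left_zero)
  show "\<And>a x. a \<in> Jset \<Longrightarrow> x \<in> carrier (fa_ring :: ('v,'e,'k::field) fa ring) \<Longrightarrow> a \<otimes>\<^bsub>fa_ring\<^esub> x \<in> Jset"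
    by (auto simp: Jset_def carrier_fa fa_ring_simps mult_finite intro: Mx_right_zero)
qed


lemma fin_diff: "finite (fsupp f) \<Longrightarrow> finite (fsupp g) \<Longrightarrow> finite (fsupp (fa_diff f g))"
  by (rule finite_subset[of _ "fsupp f \<union> fsupp g"]) (auto simp: fsupp_def fa_diff_def)

lemma fin_zero: "finite (fsupp fa_zero)" by (simp add: fsupp_def fa_zero_def)

lemma fin_sum: "finite E \<Longrightarrow> (\<And>e. e \<in> E \<Longrightarrow> finite (fsupp (F e))) \<Longrightarrow> finite (fsupp (fa_sum F E))"
  by (rule finite_subset[of _ "\<Union>e\<in>E. fsupp (F e)"]) (auto simp: fsupp_def fa_sum_def intro: ccontr)

lemma fin_ee: "finite (fsupp (fa_mult (gen_el g) (gen_el h)))"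
  by (simp add: mult_finite fin_gen)

lemma Mx_ee:
  assumes "valid x"
  shows "Mx (fa_mult (gen_el (Ed e)) (gen_el (Gh e)) :: ('v,'e,'k::field) fa) y x
    = (case dec x of None \<Rightarrow> 0 | Some (e0, x') \<Rightarrow> if e = e0 \<and> x = y then 1 else 0)"
proof (cases "dec x")
  case None then show ?thesis by (simp add: Mx_gen2 ind_def)
next
  case (Some p)
  obtain e0 x' where p: "p = (e0, x')" by (cases p)
  have d: "x = cns e0 x'" "valid x'" "loc x' = r e0" using dec_ok[OF assms] Some p by auto
  show ?thesis using Some p d by (auto simp: Mx_gen2 ind_def)
qed

lemma ck_lemma:
  assumes "finite E" "valid x" "E \<subseteq> s -` {u}"
    and "loc x = u \<Longrightarrow> \<exists>e0 x'. dec x = Some (e0, x') \<and> e0 \<in> E"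
  shows "Mx (fa_diff (gen_el (Vx u)) (fa_sum (\<lambda>e. fa_mult (gen_el (Ed e)) (gen_el (Gh e))) E)
           :: ('v,'e,'k::field) fa) y x = 0"
proof -
  have "Mx (fa_diff (gen_el (Vx u)) (fa_sum (\<lambda>e. fa_mult (gen_el (Ed e)) (gen_el (Gh e))) E)
           :: ('v,'e,'k::field) fa) y x
     = ind (loc x = u \<and> x = y) - (\<Sum>e\<in>E. (case dec x of None \<Rightarrow> 0 | Some (e0, x') \<Rightarrow> if e = e0 \<and> x = y then 1 else 0))"
    using assms by (simp add: Mx_diff fin_gen fin_sum fin_ee Mx_gen Mx_sum Mx_ee ind_def) blast
  also have "\<dots> = 0"
  proof (cases "dec x")
    case None
    then have "loc x \<noteq> u" using assms(4) by auto
    then show ?thesis using None by (simp add: ind_def)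
  next
    case (Some p)
    obtain e0 x' where p: "p = (e0, x')" by (cases p)
    have l: "loc x = s e0" using dec_loc[OF assms(2)] Some p by simp
    show ?thesis
    proof (cases "loc x = u")
      case True
      then have "e0 \<in> E" using assms(4) Some p by auto
      then show ?thesis using Some p True assms(1) by (simp add: ind_def sum.delta)
    next
      case False
      then have "e0 \<notin> E" using assms(3) l by auto
      then show ?thesis using Some p False assms(1) by (simp add: ind_def) (intro sum.neutral, auto)
    qed
  qed
  finally show ?thesis .
qed

lemma vH_lemma:
  assumes "finite E" "valid x" "loc x = u"
    and "dec x = None \<or> (\<exists>e0 x'. dec x = Some (e0, x') \<and> e0 \<notin> E)"
  shows "Mx (fa_diff (gen_el (Vx u)) (fa_sum (\<lambda>e. fa_mult (gen_el (Ed e)) (gen_el (Gh e))) E)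
           :: ('v,'e,'k::field) fa) x x = 1"
proof -
  have "Mx (fa_diff (gen_el (Vx u)) (fa_sum (\<lambda>e. fa_mult (gen_el (Ed e)) (gen_el (Gh e))) E)
           :: ('v,'e,'k::field) fa) x x
     = 1 - (\<Sum>e\<in>E. (case dec x of None \<Rightarrow> 0 | Some (e0, x') \<Rightarrow> if e = e0 \<and> x = x then 1 else 0))"
    using assms by (simp add: Mx_diff fin_gen fin_sum fin_ee Mx_gen Mx_sum Mx_ee ind_def)
  also have "\<dots> = 1"
    using assms(1,4) by (auto simp: sum.delta)
  finally show ?thesis .
qed


lemma fin_if: "finite (fsupp a) \<Longrightarrow> finite (fsupp b) \<Longrightarrow> finite (fsupp (if c then a else b))"
  by simp

lemma two_gen_J:
  assumes "\<And>x. valid x \<Longrightarrow> (case actg h x of None \<Rightarrow> None | Some z \<Rightarrow> actg g z) = (if c then actg k x else None)"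
  shows "fa_diff (fa_mult (gen_el g) (gen_el h)) (if c then gen_el k else fa_zero) \<in> (Jset :: ('v,'e,'k::field) fa set)"
  unfolding Jset_def
proof (intro CollectI conjI allI impI)
  show "finite (fsupp (fa_diff (fa_mult (gen_el g) (gen_el h)) (if c then gen_el k else fa_zero)
     :: ('v,'e,'k::field) fa))"
    by (intro fin_diff fin_ee fin_if fin_gen fin_zero)
  fix x y assume "valid x"
  then show "Mx (fa_diff (fa_mult (gen_el g) (gen_el h)) (if c then gen_el k else fa_zero)
     :: ('v,'e,'k::field) fa) y x = 0"
    using assms[of x] by (cases c) (simp_all add: Mx_diff fin_ee fin_gen fin_zero Mx_gen2 Mx_gen Mx_zero ind_def)
qed

lemma rels_J: "lpa_rels s r \<subseteq> (Jset :: ('v,'e,'k::field) fa set)"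
proof -
  have V: "fa_diff (fa_mult (gen_el (Vx v)) (gen_el (Vx w))) (if v = w then gen_el (Vx v) else fa_zero) \<in> (Jset :: ('v,'e,'k::field) fa set)" for v w
    by (rule two_gen_J) auto
  have E1: "fa_diff (fa_mult (gen_el (Vx (s e))) (gen_el (Ed e))) (gen_el (Ed e)) \<in> (Jset :: ('v,'e,'k::field) fa set)" for e
    by (rule two_gen_J[of "Vx (s e)" "Ed e" True "Ed e", simplified]) (auto simp: cons_ok)
  have E2: "fa_diff (fa_mult (gen_el (Ed e)) (gen_el (Vx (r e)))) (gen_el (Ed e)) \<in> (Jset :: ('v,'e,'k::field) fa set)" for e
    by (rule two_gen_J[of "Ed e" "Vx (r e)" True "Ed e", simplified]) auto
  have G1: "fa_diff (fa_mult (gen_el (Vx (r e))) (gen_el (Gh e))) (gen_el (Gh e)) \<in> (Jset :: ('v,'e,'k::field) fa set)" for e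
    by (rule two_gen_J[of "Vx (r e)" "Gh e" True "Gh e", simplified]) (auto dest: dec_ok split: option.splits)
  have G2: "fa_diff (fa_mult (gen_el (Gh e)) (gen_el (Vx (s e)))) (gen_el (Gh e)) \<in> (Jset :: ('v,'e,'k::field) fa set)" for e
    by (rule two_gen_J[of "Gh e" "Vx (s e)" True "Gh e", simplified]) (auto dest: dec_loc split: option.splits)
  have CK1: "fa_diff (fa_mult (gen_el (Gh e)) (gen_el (Ed f))) (if e = f then gen_el (Vx (r e)) else fa_zero) \<in> (Jset :: ('v,'e,'k::field) fa set)" for e f
    by (rule two_gen_J) (auto simp: cons_ok)
  have CK2: "regular_vertex s v \<Longrightarrow> fa_diff (gen_el (Vx v)) (fa_sum (\<lambda>e. fa_mult (gen_el (Ed e)) (gen_el (Gh e))) (s -` {v})) \<in> (Jset :: ('v,'e,'k::field) fa set)" for v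
  proof -
    assume reg: "regular_vertex s v"
    then have fin: "finite (s -` {v})" by (simp add: regular_vertex_def)
    show ?thesis unfolding Jset_def
    proof (intro CollectI conjI allI impI)
      show "finite (fsupp (fa_diff (gen_el (Vx v)) (fa_sum (\<lambda>e. fa_mult (gen_el (Ed e)) (gen_el (Gh e))) (s -` {v})) :: ('v,'e,'k::field) fa))"
        by (intro fin_diff fin_gen fin_sum fin fin_ee)
      fix x y assume x: "valid x"
      show "Mx (fa_diff (gen_el (Vx v)) (fa_sum (\<lambda>e. fa_mult (gen_el (Ed e)) (gen_el (Gh e))) (s -` {v})) :: ('v,'e,'k::field) fa) y x = 0"
      proof (rule ck_lemma[OF fin x])
        assume l: "loc x = v"
        then obtain e0 x' where d: "dec x = Some (e0, x')" using reg_ok[OF x] reg by fastforce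
        then show "\<exists>e0 x'. dec x = Some (e0, x') \<and> e0 \<in> s -` {v}" using dec_loc[OF x d] l by auto
      qed auto
    qed
  qed
  show ?thesis unfolding lpa_rels_def using V E1 E2 G1 G2 CK1 CK2 by blast
qed

lemma H_J: "u \<in> H \<Longrightarrow> gen_el (Vx u) \<in> (Jset :: ('v,'e,'k::field) fa set)"
  using H_ok by (auto simp: Jset_def fin_gen Mx_gen ind_def)

lemma S_J:
  assumes "u \<in> S" "S \<subseteq> breaking_vertices s r H"
  shows "vH s r H u \<in> (Jset :: ('v,'e,'k::field) fa set)"
proof -
  let ?E = "s -` {u} \<inter> r -` (- H)"
  have fin: "finite ?E" using assms by (auto simp: breaking_vertices_def)
  show ?thesis unfolding Jset_def vH_def
  proof (intro CollectI conjI allI impI)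
    show "finite (fsupp (fa_diff (gen_el (Vx u)) (fa_sum (\<lambda>e. fa_mult (gen_el (Ed e)) (gen_el (Gh e))) ?E) :: ('v,'e,'k::field) fa))"
      by (intro fin_diff fin_gen fin_sum fin fin_ee)
    fix x y assume x: "valid x"
    show "Mx (fa_diff (gen_el (Vx u)) (fa_sum (\<lambda>e. fa_mult (gen_el (Ed e)) (gen_el (Gh e))) ?E) :: ('v,'e,'k::field) fa) y x = 0"
    proof (rule ck_lemma[OF fin x])
      assume l: "loc x = u"
      then obtain e0 x' where d: "dec x = Some (e0, x')" "r e0 \<notin> H" using S_ok[OF x] assms(1) by fastforce
      then show "\<exists>e0 x'. dec x = Some (e0, x') \<and> e0 \<in> ?E" using dec_loc[OF x d(1)] l by auto
    qed auto
  qed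
qed

end

lemma quot_nonmem:
  fixes J :: "('v,'e,'k::field) fa set"
  assumes J: "ideal J fa_ring" "lpa_rels s r \<subseteq> J" "(\<lambda>u. gen_el (Vx u)) ` H \<subseteq> J"
    "(\<lambda>u. vH s r H u) ` S \<subseteq> J"
    and x: "x \<in> carrier fa_ring" "x \<notin> J"
  shows "lpa_cls s r x \<notin> I_HS s r H S"
proof
  interpret R: ring "fa_ring :: ('v,'e,'k::field) fa ring" by (rule ring_fa)
  let ?I = "lpa_rel_ideal s r :: ('v,'e,'k::field) fa set"
  have Jc: "J \<subseteq> carrier fa_ring" using J(1) by (simp add: additive_subgroup.a_subset ideal.axioms(1))
  have Iid: "ideal ?I fa_ring" unfolding lpa_rel_ideal_def
    by (rule R.genideal_ideal) (use J(2) Jc in blast)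
  have IJ: "?I \<subseteq> J" unfolding lpa_rel_ideal_def by (rule R.genideal_minimal[OF J(1,2)])
  let ?J' = "(+>\<^bsub>fa_ring\<^esub>) ?I ` J"
  have J'id: "ideal ?J' (LPA s r)" unfolding LPA_def
    by (rule R.ring_ideal_imp_quot_ideal[OF Iid J(1)])
  have gens: "(\<lambda>u. lpa_cls s r (gen_el (Vx u))) ` H \<union> (\<lambda>u. lpa_cls s r (vH s r H u)) ` S \<subseteq> ?J'"
    using J(3,4) by (auto simp: lpa_cls_def)
  have sub: "I_HS s r H S \<subseteq> ?J'" unfolding I_HS_def genideal_def using J'id gens by blast
  assume "lpa_cls s r x \<in> I_HS s r H S"
  then have "?I +>\<^bsub>fa_ring\<^esub> x \<in> ?J'" using sub by (auto simp: lpa_cls_def)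
  moreover have "?J' \<subseteq> carrier (fa_ring Quot ?I)"
    using J'id unfolding LPA_def by (simp add: additive_subgroup.a_subset ideal.axioms(1))
  ultimately have "x \<in> \<Union> ?J'" using R.canonical_proj_vimage_mem_iff[OF Iid _ x(1)] by blast
  moreover have "\<Union> ?J' = J" using R.ideal_incl_iff[OF Iid J(1)] IJ by blast
  ultimately show False using x(2) by blast
qed

context grep begin

lemma rep_nonmem:
  fixes f :: "('v,'e,'k::field) fa"
  assumes "S \<subseteq> breaking_vertices s r H" "valid x0" "finite (fsupp f)" "Mx f y0 x0 \<noteq> 0"
  shows "lpa_cls s r f \<notin> I_HS s r H S"
proof (rule quot_nonmem)
  show "ideal (Jset :: ('v,'e,'k::field) fa set) fa_ring" by (rule Jset_ideal)
  show "lpa_rels s r \<subseteq> (Jset :: ('v,'e,'k::field) fa set)" by (rule rels_J)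
  show "(\<lambda>u. gen_el (Vx u)) ` H \<subseteq> (Jset :: ('v,'e,'k::field) fa set)" using H_J by blast
  show "(\<lambda>u. vH s r H u) ` S \<subseteq> (Jset :: ('v,'e,'k::field) fa set)" using S_J assms(1) by blast
  show "f \<in> carrier fa_ring" using assms(3) by (simp add: carrier_fa)
  show "f \<notin> Jset" using assms(2,4) by (auto simp: Jset_def)
qed

lemma vH_nonmem:
  assumes "S \<subseteq> breaking_vertices s r H" "v \<in> breaking_vertices s r G" "valid x0" "loc x0 = v"
    and "dec x0 = None \<or> (\<exists>e0 x'. dec x0 = Some (e0, x') \<and> r e0 \<in> G)"
  shows "lpa_cls s r (vH s r G v :: ('v,'e,'k::field) fa) \<notin> I_HS s r H S"
proof -
  let ?E = "s -` {v} \<inter> r -` (- G)"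
  have fin: "finite ?E" using assms(2) by (simp add: breaking_vertices_def)
  have "Mx (vH s r G v :: ('v,'e,'k::field) fa) x0 x0 = 1"
    unfolding vH_def by (rule vH_lemma[OF fin assms(3,4)]) (use assms(5) in auto)
  moreover have "finite (fsupp (vH s r G v :: ('v,'e,'k::field) fa))"
    unfolding vH_def by (intro fin_diff fin_gen fin_sum fin fin_ee)
  ultimately show ?thesis using rep_nonmem[OF assms(1,3)] by force
qed

end

lemma hered_edge: "hereditary s r H \<Longrightarrow> s e \<in> H \<Longrightarrow> r e \<in> H"
  unfolding hereditary_def edge_rel_def by blast

fun flocz :: "('e \<Rightarrow> 'v) \<Rightarrow> 'v \<Rightarrow> 'e list \<Rightarrow> 'v" where
  "flocz s z [] = z"
| "flocz s z (e # m) = s e"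

fun fvalid :: "('e \<Rightarrow> 'v) \<Rightarrow> ('e \<Rightarrow> 'v) \<Rightarrow> 'v \<Rightarrow> 'e list \<Rightarrow> bool" where
  "fvalid s r z [] = True"
| "fvalid s r z (e # m) = (fvalid s r z m \<and> flocz s z m = r e)"

fun fdec :: "'e list \<Rightarrow> ('e \<times> 'e list) option" where
  "fdec [] = None"
| "fdec (e # m) = Some (e, m)"

lemma grep_fin:
  assumes "hereditary s r H" "z \<notin> H" "\<not> regular_vertex s z" "z \<notin> S"
  shows "grep s r H S (fvalid s r z) (flocz s z) fdec (#)"
proof
  have Hok: "fvalid s r z x \<Longrightarrow> flocz s z x \<notin> H" for x
    by (induction x) (use assms(1,2) hered_edge[OF assms(1)] in auto)
  show "\<And>x. fvalid s r z x \<Longrightarrow> flocz s z x \<notin> H" by (rule Hok)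
  show "\<And>x e. fvalid s r z x \<Longrightarrow> flocz s z x = r e \<Longrightarrow>
      fvalid s r z (e # x) \<and> fdec (e # x) = Some (e, x) \<and> flocz s z (e # x) = s e" by simp
  show "\<And>y e x. fvalid s r z y \<Longrightarrow> fdec y = Some (e, x) \<Longrightarrow> y = e # x \<and> fvalid s r z x \<and> flocz s z x = r e"
    by (case_tac y) auto
  show "\<And>x. fvalid s r z x \<Longrightarrow> regular_vertex s (flocz s z x) \<Longrightarrow> fdec x \<noteq> None"
    using assms(3) by (case_tac x) auto
  show "\<And>x. fvalid s r z x \<Longrightarrow> flocz s z x \<in> S \<Longrightarrow> \<exists>e x'. fdec x = Some (e, x') \<and> r e \<notin> H"
    subgoal for x using assms(4) Hok[of "tl x"] by (cases x) auto
    done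
qed

definition ivalid :: "('e \<Rightarrow> 'v) \<Rightarrow> ('e \<Rightarrow> 'v) \<Rightarrow> 'v set \<Rightarrow> (nat \<Rightarrow> 'e) \<Rightarrow> bool" where
  "ivalid s r H p \<longleftrightarrow> (\<forall>i. s (p (Suc i)) = r (p i) \<and> r (p i) \<notin> H)"

lemma grep_inf:
  assumes "hereditary s r H"
  shows "grep s r H S (ivalid s r H) (\<lambda>p. s (p 0)) (\<lambda>p. Some (p 0, \<lambda>i. p (Suc i))) (\<lambda>e p. case_nat e p)"
proof
  show "\<And>x. ivalid s r H x \<Longrightarrow> s (x 0) \<notin> H"
    using assms hered_edge unfolding ivalid_def by metis
  show "\<And>x e. ivalid s r H x \<Longrightarrow> s (x 0) = r e \<Longrightarrow>
      ivalid s r H (case_nat e x) \<and> Some (case_nat e x 0, \<lambda>i. case_nat e x (Suc i)) = Some (e, x) \<and> s (case_nat e x 0) = s e"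
  proof -
    fix x e assume v: "ivalid s r H x" and l: "s (x 0) = r e"
    have "r e \<notin> H" using v l assms hered_edge unfolding ivalid_def by metis
    then have "ivalid s r H (case_nat e x)" using v l unfolding ivalid_def
      by (auto split: nat.splits)
    then show "ivalid s r H (case_nat e x) \<and> Some (case_nat e x 0, \<lambda>i. case_nat e x (Suc i)) = Some (e, x) \<and> s (case_nat e x 0) = s e"
      by simp
  qed
  show "\<And>y e x. ivalid s r H y \<Longrightarrow> Some (y 0, \<lambda>i. y (Suc i)) = Some (e, x) \<Longrightarrow>
      y = case_nat e x \<and> ivalid s r H x \<and> s (x 0) = r e"
    by (auto simp: ivalid_def fun_eq_iff split: nat.splits) (metis)
  show "\<And>x. ivalid s r H x \<Longrightarrow> regular_vertex s (s (x 0)) \<Longrightarrow> Some (x 0, \<lambda>i. x (Suc i)) \<noteq> None" by simp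
  show "\<And>x. ivalid s r H x \<Longrightarrow> s (x 0) \<in> S \<Longrightarrow> \<exists>e x'. Some (x 0, \<lambda>i. x (Suc i)) = Some (e, x') \<and> r e \<notin> H"
    by (auto simp: ivalid_def)
qed

lemma path_exists:
  assumes hered: "hereditary s r H" and sat: "saturated s r H"
    and SB: "S \<subseteq> breaking_vertices s r H" and w: "w \<notin> H"
  shows "(\<exists>p. ivalid s r H p \<and> s (p 0) = w) \<or>
         (\<exists>z m. z \<notin> H \<and> \<not> regular_vertex s z \<and> z \<notin> S \<and> fvalid s r z m \<and> flocz s z m = w)"
proof -
  define nxt where "nxt u = (SOME e. s e = u \<and> r e \<notin> H)" for u
  define seq where "seq n = ((\<lambda>u. r (nxt u)) ^^ n) w" for n
  have seq0: "seq 0 = w" by (simp add: seq_def)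
  have seqS: "seq (Suc n) = r (nxt (seq n))" for n by (simp add: seq_def)
  have nxt_ok: "s (nxt u) = u \<and> r (nxt u) \<notin> H" if "\<exists>e. s e = u \<and> r e \<notin> H" for u
    unfolding nxt_def using someI_ex[OF that] .
  have good: "\<not> regular_vertex s u \<and> u \<notin> S" if "u \<notin> H" "\<not> (\<exists>e. s e = u \<and> r e \<notin> H)" for u
  proof
    show "\<not> regular_vertex s u"
      using sat that unfolding saturated_def by blast
    have "s -` {u} \<inter> r -` (- H) = {}" using that(2) by auto
    then show "u \<notin> S" using SB by (auto simp: breaking_vertices_def)
  qed
  show ?thesis
  proof (cases "\<forall>n. \<exists>e. s e = seq n \<and> r e \<notin> H")
    case True
    define p where "p n = nxt (seq n)" for n
    have "ivalid s r H p" unfolding ivalid_def p_def using nxt_ok True seqS by metis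
    moreover have "s (p 0) = w" unfolding p_def using nxt_ok True seq0 by metis
    ultimately show ?thesis by blast
  next
    case False
    then obtain n where n: "\<not> (\<exists>e. s e = seq n \<and> r e \<notin> H)"
      and lt: "\<And>m. m < n \<Longrightarrow> \<exists>e. s e = seq m \<and> r e \<notin> H"
      using exists_least_iff[of "\<lambda>n. \<not> (\<exists>e. s e = seq n \<and> r e \<notin> H)"] by blast
    have notH: "i \<le> n \<Longrightarrow> seq i \<notin> H" for i
    proof (induction i)
      case 0 then show ?case using seq0 w by simp
    next
      case (Suc i) then show ?case using nxt_ok[OF lt[of i]] seqS by simp
    qed
    define z where "z = seq n"
    have gz: "z \<notin> H \<and> \<not> regular_vertex s z \<and> z \<notin> S"
      using good[OF notH[OF order_refl] n] notH[OF order_refl] by (simp add: z_def)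
    have path: "fvalid s r z (map (\<lambda>i. nxt (seq i)) [k..<n]) \<and> flocz s z (map (\<lambda>i. nxt (seq i)) [k..<n]) = seq k"
      if "k \<le> n" for k
      using that
    proof (induction k rule: inc_induct)
      case base then show ?case by (simp add: z_def)
    next
      case (step k)
      have e: "map (\<lambda>i. nxt (seq i)) [k..<n] = nxt (seq k) # map (\<lambda>i. nxt (seq i)) [Suc k..<n]"
        using step(2) by (simp add: upt_conv_Cons)
      show ?case using step(3) nxt_ok[OF lt[OF step(2)]] seqS[of k] unfolding e by simp
    qed
    show ?thesis using gz path[of 0] seq0 by blast
  qed
qed

theorem lemma3:
  fixes s r :: "'e \<Rightarrow> 'v" and H S G T :: "'v set" and v :: 'v
  assumes "admissible s r H S" and "admissible s r G T"
    and "adm_le (H, S) (G, T)"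
    and "v \<in> breaking_vertices s r G"
  shows "lpa_cls s r (vH s r G v :: ('v,'e,'k::field) fa) \<in> (I_HS s r H S :: ('v,'e,'k) fa set set)
         \<longleftrightarrow> v \<in> S \<and> (\<forall>e. s e = v \<longrightarrow> r e \<notin> G - H)"
proof
  have hered: "hereditary s r H" and sat: "saturated s r H" and SB: "S \<subseteq> breaking_vertices s r H"
    using assms(1) by (auto simp: admissible_def)
  have HG: "H \<subseteq> G" using assms(3) by (simp add: adm_le_def)
  have vG: "v \<notin> G" and vinf: "infinite_emitter s v" using assms(4) by (auto simp: breaking_vertices_def)
  have vH: "v \<notin> H" using vG HG by blast
  have vreg: "\<not> regular_vertex s v" using vinf by (simp add: regular_vertex_def infinite_emitter_def)
  assume mem: "lpa_cls s r (vH s r G v :: ('v,'e,'k::field) fa) \<in> (I_HS s r H S :: ('v,'e,'k) fa set set)"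
  show "v \<in> S \<and> (\<forall>e. s e = v \<longrightarrow> r e \<notin> G - H)"
  proof (rule ccontr)
    assume neg: "\<not> (v \<in> S \<and> (\<forall>e. s e = v \<longrightarrow> r e \<notin> G - H))"
    show False
    proof (cases "v \<in> S")
      case False
      interpret F: grep s r H S "fvalid s r v" "flocz s v" fdec "(#)"
        by (rule grep_fin[OF hered vH vreg False])
      have "lpa_cls s r (vH s r G v :: ('v,'e,'k::field) fa) \<notin> I_HS s r H S"
        by (rule F.vH_nonmem[OF SB assms(4), of "[]"]) auto
      then show False using mem by blast
    next
      case True
      then obtain e0 where e0: "s e0 = v" "r e0 \<in> G" "r e0 \<notin> H" using neg by blast
      from path_exists[OF hered sat SB e0(3)]
      show False
      proof
        assume "\<exists>p. ivalid s r H p \<and> s (p 0) = r e0"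
        then obtain p where p: "ivalid s r H p" "s (p 0) = r e0" by blast
        interpret I: grep s r H S "ivalid s r H" "\<lambda>p. s (p 0)" "\<lambda>p. Some (p 0, \<lambda>i. p (Suc i))" "\<lambda>e p. case_nat e p"
          by (rule grep_inf[OF hered])
        have "lpa_cls s r (vH s r G v :: ('v,'e,'k::field) fa) \<notin> I_HS s r H S"
        proof (rule I.vH_nonmem[OF SB assms(4), of "case_nat e0 p"])
          show "ivalid s r H (case_nat e0 p)" using I.cons_ok[OF p(1) p(2)] by simp
          show "s (case_nat e0 p 0) = v" using e0 by simp
          show "Some (case_nat e0 p 0, \<lambda>i. case_nat e0 p (Suc i)) = None \<or>
            (\<exists>e0a x'. Some (case_nat e0 p 0, \<lambda>i. case_nat e0 p (Suc i)) = Some (e0a, x') \<and> r e0a \<in> G)"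
            using e0 by simp
        qed
        then show False using mem by blast
      next
        assume "\<exists>z m. z \<notin> H \<and> \<not> regular_vertex s z \<and> z \<notin> S \<and> fvalid s r z m \<and> flocz s z m = r e0"
        then obtain z m where zm: "z \<notin> H" "\<not> regular_vertex s z" "z \<notin> S" "fvalid s r z m" "flocz s z m = r e0"
          by blast
        interpret F: grep s r H S "fvalid s r z" "flocz s z" fdec "(#)"
          by (rule grep_fin[OF hered zm(1-3)])
        have "lpa_cls s r (vH s r G v :: ('v,'e,'k::field) fa) \<notin> I_HS s r H S"
          by (rule F.vH_nonmem[OF SB assms(4), of "e0 # m"]) (use zm e0 in auto)
        then show False using mem by blast
      qed
    qed
  qed
next
  assume rhs: "v \<in> S \<and> (\<forall>e. s e = v \<longrightarrow> r e \<notin> G - H)"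
  have HG: "H \<subseteq> G" using assms(3) by (simp add: adm_le_def)
  have "s -` {v} \<inter> r -` (- G) = s -` {v} \<inter> r -` (- H)" using rhs HG by auto
  then have eq: "vH s r G v = vH s r H v" by (simp add: vH_def)
  have "lpa_cls s r (vH s r H v :: ('v,'e,'k::field) fa)
     \<in> (\<lambda>u. lpa_cls s r (gen_el (Vx u))) ` H \<union> (\<lambda>u. lpa_cls s r (vH s r H u)) ` S"
    using rhs by blast
  then show "lpa_cls s r (vH s r G v :: ('v,'e,'k::field) fa) \<in> (I_HS s r H S :: ('v,'e,'k) fa set set)"
    unfolding I_HS_def genideal_def eq by blast
qed
end
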